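(* Let $\ell$ and $m$ be positive integers with $\ell\le m-2$, let $G$ be an abelian group written additively, let $\mathbf{a}=(a_1,\dots,a_m)$ be a sequence of elements of $G$ with set of distinct terms $A$, and let $X=\{a\in A:\mu_{\mathbf{a}}(a)\ge2\}$. Assume $|X|\ge2$, and assume there exists a positive integer $t\ge2$, being the smallest positive integer with this property, such that $\sum_{i=1}^t\rho_{x_i}(\mathbf{a})\ge\ell+t$ for some $x_1,\dots,x_t\in X$. If \[ |\Sigma^{\ell}(\mathbf{a})|=\sum_{a\in A}\mu_{\mathbf{a}}(a)-\ell+1<\begin{cases}p(G)-1,&\ell=2,\\ p(G),&\ell\ge3,\end{cases} \] then $A$ is an arithmetic progression.
   Context: $p(G)$ is the order of the smallest nontrivial subgroup of $G$, or $\infty$ if none exists. $\Sigma^{\ell}(\mathbf{a})$ is the set of all sums $a_{i_1}+\cdots+a_{i_\ell}$ with $1\le i_1<\cdots<i_\ell\le m$. $\rho_a(\mathbf{a})=|\{i\in[1,m]:a_i=a\}|$ and $\mu_{\mathbf{a}}(a)=\min(\ell,\rho_a(\mathbf{a}))$. An arithmetic progression is a set $\{c+jd:j\in[0,k-1]\}$ with $d\ne0$. *)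

theory Defs
  imports Main "HOL-Library.Extended_Nat"
begin

(* The abelian group G is the whole type 'a :: ab_group_add. *)

definition add_subgroup :: "'a::ab_group_add set \<Rightarrow> bool" where
  "add_subgroup H \<longleftrightarrow> 0 \<in> H \<and> (\<forall>x\<in>H. \<forall>y\<in>H. x - y \<in> H)"

(* p(G): smallest order of a nontrivial subgroup; \<infinity> if none (infinite subgroups have order \<infinity>) *)
definition pG :: "'a::ab_group_add itself \<Rightarrow> enat" where
  "pG _ = (INF H \<in> {H :: 'a set. add_subgroup H \<and> H \<noteq> {0}}.
              (if finite H then enat (card H) else \<infinity>))"

definition rho :: "(nat \<Rightarrow> 'a) \<Rightarrow> nat \<Rightarrow> 'a \<Rightarrow> nat" where
  "rho a m x = card {i \<in> {1..m}. a i = x}"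

definition mu :: "nat \<Rightarrow> (nat \<Rightarrow> 'a) \<Rightarrow> nat \<Rightarrow> 'a \<Rightarrow> nat" where
  "mu l a m x = min l (rho a m x)"

definition Sigma_l :: "nat \<Rightarrow> (nat \<Rightarrow> 'a::comm_monoid_add) \<Rightarrow> nat \<Rightarrow> 'a set" where
  "Sigma_l l a m = {sum a I | I. I \<subseteq> {1..m} \<and> card I = l}"

(* c + j*d written as j-fold iteration of (+ d) applied to c *)
definition arith_prog :: "'a::ab_group_add set \<Rightarrow> bool" where
  "arith_prog S \<longleftrightarrow> (\<exists>c d k. d \<noteq> 0 \<and> S = {((\<lambda>x. x + d) ^^ j) c | j. j < k})"

end

theory Submission
  imports Defs
begin

fun nsm :: "nat \<Rightarrow> 'a::ab_group_add \<Rightarrow> 'a" where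
  "nsm 0 d = 0" | "nsm (Suc j) d = nsm j d + d"

lemma nsm_add: "nsm (i + j) d = nsm i d + nsm j d"
  by (induction j) (auto simp: add.assoc)

lemma nsm_1[simp]: "nsm (Suc 0) d = d" by simp

lemma nsm_mult_zero: "nsm r d = 0 \<Longrightarrow> nsm (r * q) d = 0"
  by (induction q) (auto simp: nsm_add)

lemma nsm_mod: "nsm r d = 0 \<Longrightarrow> nsm t d = nsm (t mod r) d"
proof -
  assume h: "nsm r d = 0"
  have "t = r * (t div r) + t mod r" by simp
  hence "nsm t d = nsm (r * (t div r)) d + nsm (t mod r) d" by (metis nsm_add)
  thus ?thesis using nsm_mult_zero[OF h] by simp
qed

lemma iter_nsm: "((\<lambda>x. x + d) ^^ j) c = c + nsm j d"
  by (induction j) (auto simp: add.assoc)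

definition sp :: "'a::ab_group_add set \<Rightarrow> 'a set \<Rightarrow> 'a set" where
  "sp A B = (\<lambda>(x,y). x + y) ` (A \<times> B)"

lemma sp_iff: "z \<in> sp A B \<longleftrightarrow> (\<exists>x\<in>A. \<exists>y\<in>B. z = x + y)"
  unfolding sp_def by force

lemma sp_I: "x \<in> A \<Longrightarrow> y \<in> B \<Longrightarrow> x + y \<in> sp A B"
  unfolding sp_iff by blast

lemma finite_sp[simp]: "finite A \<Longrightarrow> finite B \<Longrightarrow> finite (sp A B)"
  unfolding sp_def by simp

lemma sp_comm_sub: "z \<in> sp A B \<Longrightarrow> z \<in> sp B A"
proof -
  assume "z \<in> sp A B"
  then obtain x y where h: "x\<in>A" "y\<in>B" "z = x + y" unfolding sp_iff by blast
  from sp_I[OF h(2) h(1)] show ?thesis using h(3) by (simp add: add.commute)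
qed

lemma sp_comm: "sp A B = sp B A"
  using sp_comm_sub by blast

lemma sp_assoc: "sp (sp A B) C = sp A (sp B C)"
proof (rule set_eqI)
  fix z
  show "z \<in> sp (sp A B) C \<longleftrightarrow> z \<in> sp A (sp B C)"
  proof
    assume "z \<in> sp (sp A B) C"
    then obtain x y c where h: "x\<in>A" "y\<in>B" "c\<in>C" "z = (x + y) + c" by (auto simp: sp_iff)
    have "y + c \<in> sp B C" using h by (intro sp_I)
    from sp_I[OF h(1) this] show "z \<in> sp A (sp B C)" using h(4) by (simp add: add.assoc)
  next
    assume "z \<in> sp A (sp B C)"
    then obtain x y c where h: "x\<in>A" "y\<in>B" "c\<in>C" "z = x + (y + c)" by (auto simp: sp_iff)
    have "x + y \<in> sp A B" using h by (intro sp_I)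
    from sp_I[OF this h(3)] show "z \<in> sp (sp A B) C" using h(4) by (simp add: add.assoc)
  qed
qed

lemma sp_mono: "A \<subseteq> A' \<Longrightarrow> B \<subseteq> B' \<Longrightarrow> sp A B \<subseteq> sp A' B'"
  unfolding sp_def by auto

lemma sp_empty_iff: "sp A B = {} \<longleftrightarrow> A = {} \<or> B = {}"
  unfolding sp_def by auto

lemma sp_singleton: "sp A {b} = (\<lambda>x. x + b) ` A"
  unfolding sp_def by auto

lemma card_translate: "card ((\<lambda>x. x + (b::'a::ab_group_add)) ` A) = card A"
  by (rule card_image) (auto simp: inj_on_def)

lemma card_le_sp: assumes "finite A" "finite B" "b \<in> B" shows "card A \<le> card (sp A B)"
proof -
  have "(\<lambda>x. x + b) ` A \<subseteq> sp A B" using assms(3) by (auto intro: sp_I)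
  hence "card ((\<lambda>x. x + b) ` A) \<le> card (sp A B)" by (intro card_mono) (auto simp: assms)
  thus ?thesis by (simp add: card_translate)
qed

lemma pG_le: assumes "add_subgroup H" "H \<noteq> {0}" "finite H"
  shows "pG TYPE('a::ab_group_add) \<le> enat (card (H::'a set))"
proof -
  have "pG TYPE('a) \<le> (if finite H then enat (card H) else \<infinity>)"
    unfolding pG_def by (rule INF_lower) (use assms in auto)
  thus ?thesis using assms by simp
qed

lemma periodic_bound:
  fixes g :: "'a::ab_group_add"
  assumes "g \<noteq> 0" "finite Y" "\<And>j. y0 + nsm j g \<in> Y"
  shows "pG TYPE('a) \<le> enat (card Y)"
proof -
  let ?Z = "(\<lambda>z. z - y0) ` Y"
  have sub: "nsm j g \<in> ?Z" for j using assms(3)[of j] by force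
  have "\<not> inj_on (\<lambda>j. nsm j g) {..card Y}"
  proof
    assume inj: "inj_on (\<lambda>j. nsm j g) {..card Y}"
    have "card ((\<lambda>j. nsm j g) ` {..card Y}) = Suc (card Y)" using card_image[OF inj] by simp
    moreover have "(\<lambda>j. nsm j g) ` {..card Y} \<subseteq> ?Z" using sub by auto
    hence "card ((\<lambda>j. nsm j g) ` {..card Y}) \<le> card ?Z" by (intro card_mono) (auto simp: assms)
    moreover have "card ?Z \<le> card Y" by (rule card_image_le[OF assms(2)])
    ultimately show False by simp
  qed
  then obtain i j where ij: "i < j" "nsm i g = nsm j g"
    unfolding inj_on_def by (metis linorder_neqE_nat atMost_iff)
  define r where "r = j - i"
  have r0: "nsm r g = 0" using ij nsm_add[of i r g] by (simp add: r_def)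
  have r1: "r \<ge> 1" using ij by (simp add: r_def)
  define H where "H = (\<lambda>j. nsm j g) ` {..<r}"
  have memH: "nsm t g \<in> H" for t
    using nsm_mod[OF r0, of t] r1 unfolding H_def by auto
  have neg: "- nsm t g = nsm (r * t - t) g" for t
  proof -
    have "nsm (r * t - t) g + nsm t g = nsm (r * t) g"
      using nsm_add[of "r*t - t" t g] r1 by (metis le_add_diff_inverse2 mult_le_mono1 mult_1)
    thus ?thesis using nsm_mult_zero[OF r0, of t] by (metis add.commute neg_eq_iff_add_eq_0)
  qed
  have "add_subgroup H"
    unfolding add_subgroup_def
  proof (intro conjI ballI)
    show "0 \<in> H" using memH[of 0] by simp
    fix x y assume "x \<in> H" "y \<in> H"
    then obtain s t where "x = nsm s g" "y = nsm t g" unfolding H_def by auto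
    hence "x - y = nsm (s + (r * t - t)) g" using neg[of t] by (simp add: nsm_add)
    thus "x - y \<in> H" using memH by simp
  qed
  moreover have "H \<noteq> {0}" using memH[of 1] assms(1) by auto
  moreover have "finite H" unfolding H_def by simp
  ultimately have "pG TYPE('a) \<le> enat (card H)" by (rule pG_le)
  also have "card H \<le> card ?Z" using memH sub
    by (intro card_mono) (auto simp: assms H_def)
  also have "card ?Z \<le> card Y" by (rule card_image_le[OF assms(2)])
  finally show ?thesis by simp
qed

lemma periodic_bound':
  fixes g :: "'a::ab_group_add"
  assumes "g \<noteq> 0" "finite Y" "Y \<noteq> {}" "\<And>y. y \<in> Y \<Longrightarrow> y + g \<in> Y"
  shows "pG TYPE('a) \<le> enat (card Y)"
proof -
  obtain y0 where "y0 \<in> Y" using assms(3) by auto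
  have "y0 + nsm j g \<in> Y" for j
    by (induction j) (use \<open>y0 \<in> Y\<close> assms(4) in \<open>auto simp: add.assoc[symmetric]\<close>)
  thus ?thesis using periodic_bound[OF assms(1,2)] by blast
qed

lemma enat_le_lt: "a \<le> b \<Longrightarrow> enat b < p \<Longrightarrow> enat a < p"
  using enat_ord_simps(1) le_less_trans by blast

definition isAP :: "'a::ab_group_add \<Rightarrow> 'a set \<Rightarrow> bool" where
  "isAP d Y \<longleftrightarrow> (\<exists>c. Y = (\<lambda>j. c + nsm j d) ` {..<card Y})"

lemma CD:
  fixes A B :: "'a::ab_group_add set"
  assumes "finite A" "finite B" "A \<noteq> {}" "B \<noteq> {}" "enat (card (sp A B)) < pG TYPE('a)"
  shows "card A + card B \<le> card (sp A B) + 1"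
  using assms
proof (induction "card B" arbitrary: A B rule: less_induct)
  case less
  show ?case
  proof (cases "card B = 1")
    case True
    then obtain b where "B = {b}" by (auto simp: card_Suc_eq)
    thus ?thesis by (simp add: sp_singleton card_translate)
  next
    case False
    have "card B > 0" using less.prems by auto
    hence cB: "card B \<ge> 2" using False by linarith
    obtain b0 where b0: "b0 \<in> B" using less.prems(4) by auto
    obtain b where b: "b \<in> B" "b \<noteq> b0"
    proof -
      have "B \<noteq> {b0}" using cB by auto
      thus ?thesis using b0 that by blast
    qed
    have "\<exists>a\<in>A. \<exists>c\<in>B. c + (a - b0) \<notin> A"
    proof (rule ccontr)
      assume "\<not> ?thesis"
      hence h: "\<And>a c. a \<in> A \<Longrightarrow> c \<in> B \<Longrightarrow> c + (a - b0) \<in> A" by blast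
      have "\<And>a. a \<in> A \<Longrightarrow> a + (b - b0) \<in> A"
        using h[OF _ b(1)] by (simp add: algebra_simps)
      hence "pG TYPE('a) \<le> enat (card A)"
        using periodic_bound'[of "b - b0" A] b less.prems by auto
      moreover have "card A \<le> card (sp A B)" using card_le_sp less.prems b0 by blast
      ultimately show False using less.prems(5) by (metis enat_ord_simps(1) leD order_le_less_trans)
    qed
    then obtain a c where ac: "a \<in> A" "c \<in> B" "c + (a - b0) \<notin> A" by blast
    define e where "e = a - b0"
    define B' where "B' = {x \<in> B. x + e \<in> A}"
    define A' where "A' = A \<union> (\<lambda>x. x + e) ` B"
    have b0B': "b0 \<in> B'" using b0 ac unfolding B'_def e_def by simp
    have B'sub: "B' \<subset> B" using ac unfolding B'_def e_def by auto
    have cB': "card B' < card B" using psubset_card_mono[OF less.prems(2) B'sub] .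
    have fB': "finite B'" using B'sub less.prems(2) finite_subset by blast
    have fA': "finite A'" unfolding A'_def using less.prems by simp
    have spsub: "sp A' B' \<subseteq> sp A B"
    proof
      fix z assume "z \<in> sp A' B'"
      then obtain x y where xy: "x \<in> A'" "y \<in> B'" "z = x + y" by (auto simp: sp_iff)
      show "z \<in> sp A B"
      proof (cases "x \<in> A")
        case True thus ?thesis using xy B'sub sp_I by blast
      next
        case False
        then obtain w where w: "w \<in> B" "x = w + e" using xy(1) unfolding A'_def by auto
        have "z = (y + e) + w" using xy w by (simp add: algebra_simps)
        moreover have "y + e \<in> A" using xy(2) unfolding B'_def by simp
        ultimately show ?thesis using sp_I w(1) by blast
      qed
    qed
    have inter: "A \<inter> (\<lambda>x. x + e) ` B = (\<lambda>x. x + e) ` B'" unfolding B'_def by auto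
    have "card A + card ((\<lambda>x. x + e) ` B) = card A' + card (A \<inter> (\<lambda>x. x + e) ` B)"
      unfolding A'_def by (rule card_Un_Int) (use less.prems in auto)
    hence sums: "card A + card B = card A' + card B'"
      unfolding inter card_translate by simp
    have "card (sp A' B') \<le> card (sp A B)" by (rule card_mono) (use spsub less.prems in auto)
    hence lt: "enat (card (sp A' B')) < pG TYPE('a)" using less.prems(5) by (meson enat_ord_simps(1) le_less_trans)
    have "card A' + card B' \<le> card (sp A' B') + 1"
      using less.hyps[OF cB' fA' fB' _ _ lt] b0B' less.prems(3) unfolding A'_def by blast
    thus ?thesis using sums \<open>card (sp A' B') \<le> card (sp A B)\<close> by linarith
  qed
qed

lemma compAP:
  fixes d :: "'a::ab_group_add"
  assumes d: "d \<noteq> 0" and fY: "finite Y" and ne: "Y \<noteq> {}"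
    and cu: "card (Y \<union> (\<lambda>y. y + d) ` Y) \<le> card Y + 1"
    and lt: "enat (card Y) < pG TYPE('a)"
  shows "\<exists>c J. Y = (\<lambda>j. c + nsm j d) ` {..<J}"
proof -
  let ?Yd = "(\<lambda>y. y + d) ` Y"
  have "\<not> ?Yd \<subseteq> Y"
  proof
    assume "?Yd \<subseteq> Y"
    hence "pG TYPE('a) \<le> enat (card Y)" using periodic_bound'[OF d fY ne] by auto
    thus False using lt by simp
  qed
  then obtain f where f: "f \<in> ?Yd" "f \<notin> Y" by auto
  have "card (Y \<union> ?Yd) = card Y + card (?Yd - Y)"
    by (metis Un_Diff_cancel card_Un_disjoint Diff_disjoint fY finite_Diff finite_imageI)
  hence "card (?Yd - Y) \<le> 1" using cu by simp
  moreover have "f \<in> ?Yd - Y" using f by simp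
  moreover have "finite (?Yd - Y)" using fY by simp
  ultimately have "\<forall>x\<in>?Yd - Y. \<forall>x'\<in>?Yd - Y. x = x'" using card_le_Suc0_iff_eq by (metis One_nat_def)
  hence "?Yd - Y = {f}" using \<open>f \<in> ?Yd - Y\<close> by blast
  hence step: "\<And>y. y \<in> Y \<Longrightarrow> y + d \<noteq> f \<Longrightarrow> y + d \<in> Y" by auto
  have hit: "\<exists>h. h \<ge> 1 \<and> y + nsm h d = f" if y: "y \<in> Y" for y
  proof (rule ccontr)
    assume nh: "\<not> ?thesis"
    have "y + nsm j d \<in> Y" for j
    proof (induction j)
      case 0 thus ?case using y by simp
    next
      case (Suc j)
      have "\<not> (Suc j \<ge> 1 \<and> y + nsm (Suc j) d = f)" using nh by blast
      hence "y + nsm j d + d \<noteq> f" by (simp add: add.assoc)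
      thus ?case using step[OF Suc] by (simp add: add.assoc)
    qed
    hence "pG TYPE('a) \<le> enat (card Y)" using periodic_bound[OF d fY] by blast
    thus False using lt by simp
  qed
  define h where "h y = (LEAST k. k \<ge> 1 \<and> y + nsm k d = f)" for y
  have h1: "h y \<ge> 1 \<and> y + nsm (h y) d = f" if "y \<in> Y" for y
    unfolding h_def using hit[OF that] by (metis (mono_tags, lifting) LeastI)
  have hmin: "\<not> (k \<ge> 1 \<and> y + nsm k d = f)" if "k < h y" for y k
    using that unfolding h_def using not_less_Least by blast
  have hin: "y + nsm i d \<in> Y" if "y \<in> Y" "i < h y" for y i
    using that(2)
  proof (induction i)
    case 0 thus ?case using that(1) by simp
  next
    case (Suc i)
    have "y + nsm i d \<in> Y" using Suc by simp
    moreover have "y + nsm i d + d \<noteq> f" using hmin[OF Suc.prems] by (simp add: add.assoc)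
    ultimately have "y + nsm i d + d \<in> Y" using step by blast
    thus ?case by (simp add: add.assoc)
  qed
  define J where "J = Max (h ` Y)"
  have "J \<in> h ` Y" unfolding J_def using fY ne by simp
  then obtain ys where ys: "ys \<in> Y" "h ys = J" by auto
  have "Y = (\<lambda>j. ys + nsm j d) ` {..<J}"
  proof
    show "(\<lambda>j. ys + nsm j d) ` {..<J} \<subseteq> Y" using hin[OF ys(1)] ys(2) by auto
  next
    show "Y \<subseteq> (\<lambda>j. ys + nsm j d) ` {..<J}"
    proof
      fix y assume y: "y \<in> Y"
      have hle: "h y \<le> J" unfolding J_def using fY y by simp
      have "ys + nsm (J - h y) d + nsm (h y) d = ys + nsm J d"
        using nsm_add[of "J - h y" "h y" d] hle by (simp add: add.assoc)
      also have "\<dots> = f" using h1[OF ys(1)] ys(2) by simp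
      also have "\<dots> = y + nsm (h y) d" using h1[OF y] by simp
      finally have "y = ys + nsm (J - h y) d" by simp
      moreover have "J - h y < J" using h1[OF y] hle by simp
      ultimately show "y \<in> (\<lambda>j. ys + nsm j d) ` {..<J}" by auto
    qed
  qed
  thus ?thesis by blast
qed

lemma AP_inj:
  fixes d :: "'a::ab_group_add"
  assumes d: "d \<noteq> 0" and lt: "enat (card ((\<lambda>j. c + nsm j d) ` {..<J})) < pG TYPE('a)"
  shows "inj_on (\<lambda>j. c + nsm j d) {..<J}"
proof (rule ccontr)
  let ?Y = "(\<lambda>j. c + nsm j d) ` {..<J}"
  assume "\<not> ?thesis"
  then obtain x y where xy: "x < J" "y < J" "x \<noteq> y" "c + nsm x d = c + nsm y d"
    unfolding inj_on_def by auto
  obtain i j where ij: "i < j" "j < J" "nsm i d = nsm j d"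
  proof (cases "x < y")
    case True thus ?thesis using xy that[of x y] by simp
  next
    case False thus ?thesis using xy that[of y x] by simp
  qed
  define r where "r = j - i"
  have r0: "nsm r d = 0" using ij nsm_add[of i r d] by (simp add: r_def)
  have r1: "r \<ge> 1" "r < J" using ij by (auto simp: r_def)
  have "c + nsm t d \<in> ?Y" for t
  proof -
    have "t mod r < r" using r1 by simp
    hence "t mod r < J" using r1 by linarith
    thus ?thesis using nsm_mod[OF r0, of t] by auto
  qed
  hence "pG TYPE('a) \<le> enat (card ?Y)" using periodic_bound[OF d, of ?Y c] by simp
  thus False using lt by simp
qed

lemma AP_of_rep:
  fixes d :: "'a::ab_group_add"
  assumes d: "d \<noteq> 0" and Y: "Y = (\<lambda>j. c + nsm j d) ` {..<J}" and lt: "enat (card Y) < pG TYPE('a)"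
  shows "isAP d Y" "card Y = J"
proof -
  have "inj_on (\<lambda>j. c + nsm j d) {..<J}" using AP_inj[OF d] lt Y by simp
  hence "card Y = J" using Y card_image by fastforce
  thus "card Y = J" "isAP d Y" unfolding isAP_def using Y by auto
qed

lemma isAP_translate:
  assumes "isAP d Y" shows "isAP d ((\<lambda>y. y + t) ` Y)"
proof -
  obtain c where c: "Y = (\<lambda>j. c + nsm j d) ` {..<card Y}" using assms unfolding isAP_def by blast
  have "(\<lambda>y. y + t) ` Y = (\<lambda>j. (c + t) + nsm j d) ` {..<card ((\<lambda>y. y + t) ` Y)}"
    unfolding card_translate by (subst c) (auto simp: image_image algebra_simps)
  thus ?thesis unfolding isAP_def by blast
qed

lemma sp_AP:
  assumes "n1 \<ge> 1" "n2 \<ge> 1"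
  shows "sp ((\<lambda>j. c1 + nsm j d) ` {..<n1}) ((\<lambda>j. c2 + nsm j d) ` {..<n2})
          \<subseteq> (\<lambda>j. (c1 + c2) + nsm j d) ` {..<n1 + n2 - 1}"
proof
  fix z assume "z \<in> sp ((\<lambda>j. c1 + nsm j d) ` {..<n1}) ((\<lambda>j. c2 + nsm j d) ` {..<n2})"
  then obtain i j where ij: "i < n1" "j < n2" "z = (c1 + nsm i d) + (c2 + nsm j d)" by (auto simp: sp_iff)
  hence "z = (c1 + c2) + nsm (i + j) d" by (simp add: nsm_add algebra_simps)
  moreover have "i + j < n1 + n2 - 1" using ij assms by linarith
  ultimately show "z \<in> (\<lambda>j. (c1 + c2) + nsm j d) ` {..<n1 + n2 - 1}" by blast
qed

lemma lemM:
  fixes d :: "'a::ab_group_add"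
  assumes d: "d \<noteq> 0" and fA: "finite A" and neA: "A \<noteq> {}"
    and B: "B = (\<lambda>j. c + nsm j d) ` {..<n}" and n2: "n \<ge> 2"
    and cr: "card (sp A B) + 1 \<le> card A + n"
    and lt: "enat (card (sp A B)) < pG TYPE('a)"
  shows "isAP d A"
proof -
  define Y where "Y j = sp A ((\<lambda>i. c + nsm i d) ` {..<j})" for j
  have fY: "finite (Y j)" for j unfolding Y_def using fA by simp
  have memY: "a + (c + nsm i d) \<in> Y j" if "a \<in> A" "i < j" for a i j
  proof -
    have "c + nsm i d \<in> (\<lambda>i. c + nsm i d) ` {..<j}" using that by auto
    thus ?thesis unfolding Y_def by (rule sp_I[OF that(1)])
  qed
  have YE: "\<exists>a i. a \<in> A \<and> i < j \<and> z = a + (c + nsm i d)" if "z \<in> Y j" for z j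
    using that unfolding Y_def by (auto simp: sp_iff)
  have YSuc: "Y (Suc j) = Y j \<union> (\<lambda>y. y + d) ` Y j" if j1: "j \<ge> 1" for j
  proof (rule set_eqI)
    fix z show "z \<in> Y (Suc j) \<longleftrightarrow> z \<in> Y j \<union> (\<lambda>y. y + d) ` Y j"
    proof
      assume "z \<in> Y (Suc j)"
      then obtain a i where ai: "a \<in> A" "i < Suc j" "z = a + (c + nsm i d)" using YE by blast
      show "z \<in> Y j \<union> (\<lambda>y. y + d) ` Y j"
      proof (cases "i < j")
        case True thus ?thesis using memY[OF ai(1) True] ai(3) by simp
      next
        case False
        hence "i = j" using ai by simp
        then obtain i' where i': "i = Suc i'" "i' < j" using j1 by (cases i) auto
        hence "z = (a + (c + nsm i' d)) + d" using ai by (simp add: add.assoc)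
        moreover have "a + (c + nsm i' d) \<in> Y j" by (rule memY[OF ai(1) i'(2)])
        ultimately show ?thesis by blast
      qed
    next
      assume "z \<in> Y j \<union> (\<lambda>y. y + d) ` Y j"
      then show "z \<in> Y (Suc j)"
      proof
        assume "z \<in> Y j"
        then obtain a i where ai: "a \<in> A" "i < j" "z = a + (c + nsm i d)" using YE by blast
        thus ?thesis using memY[of a i "Suc j"] by simp
      next
        assume "z \<in> (\<lambda>y. y + d) ` Y j"
        then obtain y where y: "y \<in> Y j" "z = y + d" by blast
        then obtain a i where ai: "a \<in> A" "i < j" "y = a + (c + nsm i d)" using YE by blast
        hence "z = a + (c + nsm (Suc i) d)" using y by (simp add: add.assoc)
        thus ?thesis using memY[of a "Suc i" "Suc j"] ai by simp
      qed
    qed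
  qed
  have Yn: "Y n = sp A B" unfolding Y_def B by simp
  have Ysub: "Y j \<subseteq> sp A B" if "j \<le> n" for j
    unfolding Yn[symmetric] Y_def using that by (intro sp_mono) auto
  have fS: "finite (sp A B)" using Yn fY by metis
  have Yne: "Y j \<noteq> {}" if "j \<ge> 1" for j
  proof -
    have "c + nsm 0 d \<in> (\<lambda>i. c + nsm i d) ` {..<j}" using that by (intro imageI) simp
    thus ?thesis unfolding Y_def sp_empty_iff using neA by blast
  qed
  have grow: "card (Y j) + 1 \<le> card (Y (Suc j))" if j: "j \<ge> 1" "Suc j \<le> n" for j
  proof -
    have "\<not> (\<lambda>y. y + d) ` Y j \<subseteq> Y j"
    proof
      assume h: "(\<lambda>y. y + d) ` Y j \<subseteq> Y j"
      have "\<And>y. y \<in> Y j \<Longrightarrow> y + d \<in> Y j" using h by auto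
      hence p: "pG TYPE('a) \<le> enat (card (Y j))" by (rule periodic_bound'[OF d fY Yne[OF j(1)]])
      have "card (Y j) \<le> card (sp A B)" by (rule card_mono[OF fS Ysub]) (use j in simp)
      hence "enat (card (Y j)) < pG TYPE('a)" using lt by (rule enat_le_lt)
      thus False using p by simp
    qed
    then obtain w where w: "w \<in> (\<lambda>y. y + d) ` Y j" "w \<notin> Y j" by blast
    have "Y j \<subseteq> Y (Suc j)" using YSuc[OF j(1)] by simp
    moreover have "w \<in> Y (Suc j)" using YSuc[OF j(1)] w(1) by simp
    ultimately have "Y j \<subset> Y (Suc j)" using w(2) by blast
    hence "card (Y j) < card (Y (Suc j))" by (rule psubset_card_mono[OF fY])
    thus ?thesis by simp
  qed
  have chain: "card (Y 2) + (j - 2) \<le> card (Y j)" if "2 \<le> j" "j \<le> n" for j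
    using that
  proof (induction j)
    case 0 thus ?case by simp
  next
    case (Suc k)
    show ?case
    proof (cases "Suc k = 2")
      case True thus ?thesis by (simp add: numeral_2_eq_2)
    next
      case False
      hence k2: "2 \<le> k" using Suc.prems by simp
      have ih: "card (Y 2) + (k - 2) \<le> card (Y k)" using Suc.IH k2 Suc.prems(2) by simp
      have "card (Y k) + 1 \<le> card (Y (Suc k))" using grow[of k] k2 Suc.prems(2) by simp
      thus ?thesis using ih k2 by simp
    qed
  qed
  have "card (Y 2) + (n - 2) \<le> card (sp A B)" using chain[OF n2 order.refl] Yn by simp
  hence c2: "card (Y 2) \<le> card A + 1" using cr n2 by linarith
  have Y1: "Y 1 = (\<lambda>x. x + c) ` A" unfolding Y_def by (simp add: lessThan_Suc sp_singleton)
  have cY1: "card (Y 1) = card A" unfolding Y1 card_translate ..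
  have Y2: "Y 2 = Y 1 \<union> (\<lambda>y. y + d) ` Y 1" using YSuc[of 1] by (simp add: numeral_2_eq_2)
  have lt1: "enat (card (Y 1)) < pG TYPE('a)"
  proof -
    have "card (Y 1) \<le> card (sp A B)" using Ysub[of 1] n2 fS card_mono by auto
    thus ?thesis using lt by (rule enat_le_lt)
  qed
  obtain c' J where "Y 1 = (\<lambda>j. c' + nsm j d) ` {..<J}"
    using compAP[OF d fY Yne[of 1] _ lt1] c2 cY1 Y2 by auto
  hence "isAP d (Y 1)" using AP_of_rep(1)[OF d _ lt1] by blast
  hence "isAP d ((\<lambda>y. y + - c) ` Y 1)" by (rule isAP_translate)
  moreover have "(\<lambda>y. y + - c) ` Y 1 = A" unfolding Y1 by (auto simp: image_image)
  ultimately show ?thesis by simp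
qed

lemma lemL:
  fixes d :: "'a::ab_group_add"
  assumes d: "d \<noteq> 0" and fA: "finite A" and fB: "finite B" and neA: "A \<noteq> {}" and neB: "B \<noteq> {}"
    and sub: "sp A B \<subseteq> (\<lambda>j. c + nsm j d) ` {..<n}" and le: "n + 1 \<le> card A + card B"
    and lt: "enat (n + 1) < pG TYPE('a)"
  shows "isAP d B"
proof -
  let ?B2 = "B \<union> (\<lambda>y. y + d) ` B"
  have sub2: "sp A ?B2 \<subseteq> (\<lambda>j. c + nsm j d) ` {..<Suc n}"
  proof
    fix z assume "z \<in> sp A ?B2"
    then obtain a b where ab: "a \<in> A" "b \<in> ?B2" "z = a + b" by (auto simp: sp_iff)
    show "z \<in> (\<lambda>j. c + nsm j d) ` {..<Suc n}"
    proof (cases "b \<in> B")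
      case True
      hence "z \<in> sp A B" using sp_I[OF ab(1), of b B] ab(3) by simp
      thus ?thesis using sub by auto
    next
      case False
      then obtain b' where b': "b' \<in> B" "b = b' + d" using ab(2) by auto
      hence "a + b' \<in> sp A B" using sp_I[OF ab(1) b'(1)] by simp
      then obtain j where j: "j < n" "a + b' = c + nsm j d" using sub by auto
      hence "z = c + nsm (Suc j) d" using ab b' by (simp add: algebra_simps)
      thus ?thesis using j by (intro rev_image_eqI[of "Suc j"]) auto
    qed
  qed
  have fB2: "finite ?B2" using fB by simp
  have "card (sp A ?B2) \<le> card ((\<lambda>j. c + nsm j d) ` {..<Suc n})" using sub2 by (intro card_mono) auto
  also have "\<dots> \<le> card {..<Suc n}" by (rule card_image_le) simp
  finally have c2: "card (sp A ?B2) \<le> Suc n" by simp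
  have "enat (card (sp A ?B2)) < pG TYPE('a)" using c2 lt enat_le_lt by simp
  hence "card A + card ?B2 \<le> card (sp A ?B2) + 1" using CD[OF fA fB2 neA] neB by blast
  hence cu: "card ?B2 \<le> card B + 1" using c2 le by linarith
  have "card (sp A B) \<le> card ((\<lambda>j. c + nsm j d) ` {..<n})" using sub by (intro card_mono) auto
  also have "\<dots> \<le> card {..<n}" by (rule card_image_le) simp
  finally have "card (sp A B) \<le> n" by simp
  moreover obtain a0 where "a0 \<in> A" using neA by auto
  hence "card B \<le> card (sp A B)" using card_le_sp[of B A a0] fA fB by (simp add: sp_comm)
  ultimately have "card B \<le> n + 1" by simp
  hence ltB: "enat (card B) < pG TYPE('a)" using lt by (rule enat_le_lt)
  obtain c' J where "B = (\<lambda>j. c' + nsm j d) ` {..<J}" using compAP[OF d fB neB cu ltB] by blast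
  thus ?thesis using AP_of_rep(1)[OF d _ ltB] by blast
qed

lemma two_AP:
  fixes b b' :: "'a::ab_group_add"
  assumes "b \<noteq> b'"
  shows "{b, b'} = (\<lambda>j. b + nsm j (b' - b)) ` {..<2}"
  by (auto simp: numeral_2_eq_2 lessThan_Suc)

lemma isAP_rep:
  assumes "isAP d Y" shows "Y = (\<lambda>j. (SOME c. Y = (\<lambda>j. c + nsm j d) ` {..<card Y}) + nsm j d) ` {..<card Y}"
  using assms unfolding isAP_def by (rule someI_ex)

lemma A_from_B:
  fixes d :: "'a::ab_group_add"
  assumes d: "d \<noteq> 0" and ap: "isAP d B" and fA: "finite A" and neA: "A \<noteq> {}"
    and cB: "card B \<ge> 2" and cr: "card (sp A B) + 1 \<le> card A + card B"
    and lt: "enat (card (sp A B)) < pG TYPE('a)"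
  shows "isAP d A"
  using lemM[OF d fA neA isAP_rep[OF ap] cB cr lt] .

lemma card_inter_translates:
  fixes A :: "'a::ab_group_add set"
  assumes fA: "finite A" and b: "b \<in> B" and b': "b' \<in> B" and fB: "finite B"
    and cr: "card (sp A B) + 1 \<le> card A + card B"
  shows "card A + 1 \<le> card ((\<lambda>x. x + b) ` A \<inter> (\<lambda>x. x + b') ` A) + card B"
proof -
  let ?U = "(\<lambda>x. x + b) ` A" and ?U' = "(\<lambda>x. x + b') ` A"
  have "?U \<subseteq> sp A B" using b by (auto intro: sp_I)
  moreover have "?U' \<subseteq> sp A B" using b' by (auto intro: sp_I)
  ultimately have "card (?U \<union> ?U') \<le> card (sp A B)" using fA fB by (intro card_mono) auto
  moreover have "card ?U + card ?U' = card (?U \<union> ?U') + card (?U \<inter> ?U')"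
    using fA by (intro card_Un_Int) auto
  ultimately show ?thesis using cr unfolding card_translate by linarith
qed

lemma three_sets_card:
  assumes "finite U1" "finite U2" "finite U3"
  shows "card U1 + card U2 + card U3 \<le> card (U1 \<union> U2 \<union> U3) + card (U1 \<inter> U2) + card (U1 \<inter> U3) + card (U2 \<inter> U3)"
proof -
  have a: "card U1 + card U2 = card (U1 \<union> U2) + card (U1 \<inter> U2)" using assms by (intro card_Un_Int) auto
  have b: "card (U1 \<union> U2) + card U3 = card (U1 \<union> U2 \<union> U3) + card ((U1 \<union> U2) \<inter> U3)" using assms by (intro card_Un_Int) auto
  have "(U1 \<union> U2) \<inter> U3 = (U1 \<inter> U3) \<union> (U2 \<inter> U3)" by blast
  hence "card ((U1 \<union> U2) \<inter> U3) \<le> card (U1 \<inter> U3) + card (U2 \<inter> U3)" by (metis card_Un_le)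
  thus ?thesis using a b by linarith
qed

lemma vosper_core:
  fixes A B :: "'a::ab_group_add set"
  assumes IH: "\<And>(A'::'a set) B'. card A' * card B' < card A * card B \<Longrightarrow> finite A' \<Longrightarrow> finite B' \<Longrightarrow>
      card A' \<ge> 2 \<Longrightarrow> card B' \<ge> 2 \<Longrightarrow> card (sp A' B') + 1 \<le> card A' + card B' \<Longrightarrow>
      enat (card (sp A' B') + 1) < pG TYPE('a) \<Longrightarrow> \<exists>d. d \<noteq> 0 \<and> isAP d A' \<and> isAP d B'"
    and fA: "finite A" and fB: "finite B" and cA: "card A \<ge> 2" and cB: "card B \<ge> 2"
    and kle: "card B \<le> card A"
    and cr: "card (sp A B) + 1 \<le> card A + card B"
    and lt: "enat (card (sp A B) + 1) < pG TYPE('a)"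
  shows "\<exists>d. d \<noteq> 0 \<and> isAP d A \<and> isAP d B"
proof -
  have neA: "A \<noteq> {}" using cA by auto
  have neB: "B \<noteq> {}" using cB by auto
  have lt0: "enat (card (sp A B)) < pG TYPE('a)" using lt by (rule enat_le_lt[rotated]) simp
  have fS: "finite (sp A B)" using fA fB by simp
  have cdA: "card A \<le> card (sp A B)" using neB card_le_sp[OF fA fB] by blast
  obtain a0 where a0: "a0 \<in> A" using neA by auto
  have cdB: "card B \<le> card (sp A B)" using card_le_sp[OF fB fA a0] by (simp add: sp_comm)
  have ltA: "enat (card A) < pG TYPE('a)" using cdA lt0 by (rule enat_le_lt)
  have ltB: "enat (card B) < pG TYPE('a)" using cdB lt0 by (rule enat_le_lt)
  have CDe: "card A + card B = card (sp A B) + 1" using CD[OF fA fB neA neB lt0] cr by linarith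
  have nonper: False if "g \<noteq> 0" "\<And>x. x \<in> A \<Longrightarrow> x + g \<in> A" for g
  proof -
    have "pG TYPE('a) \<le> enat (card A)" by (rule periodic_bound'[OF that(1) fA neA that(2)])
    thus False using ltA by simp
  qed
  show ?thesis
  proof (cases "card B = 2")
    case True
    then obtain b b' where bb: "B = {b, b'}" "b \<noteq> b'" by (auto simp: card_Suc_eq numeral_2_eq_2)
    define d where "d = b' - b"
    have d0: "d \<noteq> 0" using bb unfolding d_def by simp
    have Brep: "B = (\<lambda>j. b + nsm j d) ` {..<2}" unfolding bb(1) d_def by (rule two_AP[OF bb(2)])
    have apB: "isAP d B" using AP_of_rep(1)[OF d0 Brep ltB] .
    have apA: "isAP d A" using lemM[OF d0 fA neA Brep _ _ lt0] cr True by simp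
    show ?thesis using d0 apA apB by blast
  next
    case False
    hence k3: "card B \<ge> 3" using cB by simp
    show ?thesis
    proof (cases "\<exists>b b' e. b \<in> B \<and> b' \<in> B \<and> b \<noteq> b' \<and> e + b \<in> A \<and> e + b' \<in> A \<and> \<not> (\<forall>c\<in>B. c + e \<in> A)")
      case True
      then obtain b b' e where bbe: "b \<in> B" "b' \<in> B" "b \<noteq> b'" "e + b \<in> A" "e + b' \<in> A"
        and nc: "\<not> (\<forall>c\<in>B. c + e \<in> A)" by blast
      define B' where "B' = {x \<in> B. x + e \<in> A}"
      define A' where "A' = A \<union> (\<lambda>x. x + e) ` B"
      have B'sub: "B' \<subset> B" using nc unfolding B'_def by auto
      have cB'lt: "card B' < card B" using psubset_card_mono[OF fB B'sub] .
      have fB': "finite B'" using B'sub fB finite_subset by blast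
      have fA': "finite A'" unfolding A'_def using fA fB by simp
      have "{b, b'} \<subseteq> B'" unfolding B'_def using bbe by (auto simp: add.commute)
      moreover have "card {b, b'} = 2" using bbe(3) by simp
      ultimately have cB'2: "card B' \<ge> 2" using card_mono[OF fB'] by metis
      have cA'A: "card A \<le> card A'" unfolding A'_def using fA fB by (intro card_mono) auto
      have spsub: "sp A' B' \<subseteq> sp A B"
      proof
        fix z assume "z \<in> sp A' B'"
        then obtain x y where xy: "x \<in> A'" "y \<in> B'" "z = x + y" by (auto simp: sp_iff)
        have yB: "y \<in> B" using xy(2) B'sub by auto
        show "z \<in> sp A B"
        proof (cases "x \<in> A")
          case True thus ?thesis using sp_I[OF True yB] xy(3) by simp
        next
          case False
          then obtain w where w: "w \<in> B" "x = w + e" using xy(1) unfolding A'_def by auto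
          have "z = (y + e) + w" using xy w by (simp add: algebra_simps)
          moreover have "y + e \<in> A" using xy(2) unfolding B'_def by simp
          ultimately show ?thesis using sp_I[OF _ w(1), of "y + e" A] by simp
        qed
      qed
      have inter: "A \<inter> (\<lambda>x. x + e) ` B = (\<lambda>x. x + e) ` B'" unfolding B'_def by auto
      have "card A + card ((\<lambda>x. x + e) ` B) = card A' + card (A \<inter> (\<lambda>x. x + e) ` B)"
        unfolding A'_def by (rule card_Un_Int) (use fA fB in auto)
      hence sums: "card A + card B = card A' + card B'"
        unfolding inter card_translate by simp
      have csub: "card (sp A' B') \<le> card (sp A B)" by (rule card_mono[OF fS spsub])
      have lt': "enat (card (sp A' B')) < pG TYPE('a)" using csub lt0 by (rule enat_le_lt)
      have "card A' + card B' \<le> card (sp A' B') + 1"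
        using CD[OF fA' fB' _ _ lt'] cB'2 cA'A cA by fastforce
      hence eqc: "card (sp A' B') = card (sp A B)" using sums csub cr by linarith
      have speq: "sp A' B' = sp A B" using card_subset_eq[OF fS spsub eqc] .
      have prod: "card A' * card B' < card A * card B"
      proof -
        define x where "x = card B - card B'"
        define y where "y = card A - card B'"
        have x: "card B = card B' + x" "x \<ge> 1" using cB'lt unfolding x_def by linarith+
        have y: "card A = card B' + y" "y \<ge> 1" using cB'lt kle unfolding y_def by linarith+
        have a': "card A' = card B' + x + y" using sums x y by linarith
        have "card A' * card B' + x * y = card A * card B" unfolding a' x(1) y(1) by (simp add: algebra_simps)
        moreover have "x * y \<ge> 1" using x y by simp
        ultimately show ?thesis by linarith
      qed
      have cA'2: "card A' \<ge> 2" using cA'A cA by simp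
      have cr': "card (sp A' B') + 1 \<le> card A' + card B'" using eqc sums cr by linarith
      have lt'': "enat (card (sp A' B') + 1) < pG TYPE('a)" using eqc lt by simp
      obtain d where d: "d \<noteq> 0" "isAP d A'" "isAP d B'"
        using IH[OF prod fA' fB' cA'2 cB'2 cr' lt''] by blast
      obtain c1 where c1: "A' = (\<lambda>j. c1 + nsm j d) ` {..<card A'}" using d(2) unfolding isAP_def by blast
      obtain c2 where c2: "B' = (\<lambda>j. c2 + nsm j d) ` {..<card B'}" using d(3) unfolding isAP_def by blast
      have "sp A' B' = sp ((\<lambda>j. c1 + nsm j d) ` {..<card A'}) ((\<lambda>j. c2 + nsm j d) ` {..<card B'})"
        using c1 c2 by (rule arg_cong2[where f=sp])
      also have "\<dots> \<subseteq> (\<lambda>j. (c1 + c2) + nsm j d) ` {..<card A' + card B' - 1}"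
        by (rule sp_AP) (use cA'2 cB'2 in auto)
      finally have sub: "sp A B \<subseteq> (\<lambda>j. (c1 + c2) + nsm j d) ` {..<card A' + card B' - 1}" using speq by simp
      have n1: "card A' + card B' - 1 + 1 \<le> card A + card B" using sums cA by linarith
      have "card A' + card B' - 1 + 1 = card (sp A B) + 1" using sums CDe cA by linarith
      hence ltn: "enat (card A' + card B' - 1 + 1) < pG TYPE('a)" using lt by simp
      have apB: "isAP d B" using lemL[OF d(1) fA fB neA neB sub n1 ltn] .
      have sub2: "sp B A \<subseteq> (\<lambda>j. (c1 + c2) + nsm j d) ` {..<card A' + card B' - 1}" using sub by (simp add: sp_comm)
      have apA: "isAP d A" using lemL[OF d(1) fB fA neB neA sub2 _ ltn] n1 by simp
      show ?thesis using d(1) apA apB by blast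
    next
      case False
      hence b1: "\<And>b b' e. b \<in> B \<Longrightarrow> b' \<in> B \<Longrightarrow> b \<noteq> b' \<Longrightarrow> e + b \<in> A \<Longrightarrow> e + b' \<in> A \<Longrightarrow> c \<in> B \<Longrightarrow> c + e \<in> A" for c
        by blast
      obtain b b' where bb: "b \<in> B" "b' \<in> B" "b \<noteq> b'"
      proof -
        obtain b where "b \<in> B" using neB by auto
        moreover have "B \<noteq> {b}" using cB by auto
        ultimately show ?thesis using that by blast
      qed
      let ?I = "(\<lambda>x. x + b) ` A \<inter> (\<lambda>x. x + b') ` A"
      have cI: "card A + 1 \<le> card ?I + card B" by (rule card_inter_translates[OF fA bb(1,2) fB cr])
      define D where "D = (\<lambda>y. y - b - b') ` ?I"
      have cD: "card D = card ?I" unfolding D_def by (rule card_image) (auto simp: inj_on_def)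
      have fD: "finite D" unfolding D_def using fA by simp
      have Dmem: "e + b \<in> A \<and> e + b' \<in> A" if "e \<in> D" for e
        using that unfolding D_def by (auto simp: algebra_simps)
      have DB: "c + e \<in> A" if "e \<in> D" "c \<in> B" for e c
        using b1[OF bb _ _ that(2)] Dmem[OF that(1)] by blast
      have spDB: "sp D B \<subseteq> A"
      proof
        fix z assume "z \<in> sp D B"
        then obtain e c where ec: "e \<in> D" "c \<in> B" "z = e + c" by (auto simp: sp_iff)
        have "c + e \<in> A" by (rule DB[OF ec(1,2)])
        thus "z \<in> A" using ec(3) by (simp add: add.commute)
      qed
      show ?thesis
      proof (cases "card A = card B")
        case False
        hence "card A \<ge> card B + 1" using kle by simp
        hence cD2: "card D \<ge> 2" using cI cD by linarith
        have neD: "D \<noteq> {}" using cD2 by auto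
        have cspD: "card (sp D B) \<le> card A" by (rule card_mono[OF fA spDB])
        have ltD: "enat (card (sp D B)) < pG TYPE('a)" using cspD ltA by (rule enat_le_lt)
        have cdb: "card D + card B \<le> card (sp D B) + 1" using CD[OF fD fB neD neB ltD] .
        have crD: "card (sp D B) + 1 \<le> card D + card B" using cspD cI cD by linarith
        have ltD1: "enat (card (sp D B) + 1) < pG TYPE('a)" using cspD cdA lt
          by (intro enat_le_lt[OF _ lt]) linarith
        have "card D < card A" using cdb cspD cB by linarith
        hence prod: "card D * card B < card A * card B" using cB by simp
        obtain d where d: "d \<noteq> 0" "isAP d D" "isAP d B"
          using IH[OF prod fD fB cD2 cB crD ltD1] by blast
        have "isAP d A" by (rule A_from_B[OF d(1) d(3) fA neA cB cr lt0])
        thus ?thesis using d by blast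
      next
        case True
        have "card ?I \<ge> 1" using cI True by simp
        hence "?I \<noteq> {}" by (intro notI) simp
        then obtain y0 where "y0 \<in> ?I" by blast
        hence e0D: "y0 - b - b' \<in> D" unfolding D_def by blast
        define e0 where "e0 = y0 - b - b'"
        have sub0: "(\<lambda>c. c + e0) ` B \<subseteq> A" using DB e0D unfolding e0_def by auto
        have "card ((\<lambda>c. c + e0) ` B) = card A" using True by (simp add: card_translate)
        hence Aeq: "A = (\<lambda>c. c + e0) ` B" using card_subset_eq[OF fA sub0] by simp
        have pair: "card ((\<lambda>x. x + \<beta>) ` A \<inter> (\<lambda>x. x + \<beta>') ` A) \<le> 1"
          if "\<beta> \<in> B" "\<beta>' \<in> B" "\<beta> \<noteq> \<beta>'" for \<beta> \<beta>'
        proof (rule ccontr)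
          let ?J = "(\<lambda>x. x + \<beta>) ` A \<inter> (\<lambda>x. x + \<beta>') ` A"
          assume "\<not> card ?J \<le> 1"
          moreover have "finite ?J" using fA by simp
          ultimately have "\<not> (\<forall>u\<in>?J. \<forall>v\<in>?J. u = v)" using card_le_Suc0_iff_eq[of ?J] by simp
          then obtain y y' where yy: "y \<in> ?J" "y' \<in> ?J" "y \<noteq> y'" by blast
          obtain x1 x2 where x12: "x1 \<in> A" "x2 \<in> A" "y = x1 + \<beta>" "y = x2 + \<beta>'" using yy(1) by auto
          obtain x1' x2' where x12': "x1' \<in> A" "x2' \<in> A" "y' = x1' + \<beta>" "y' = x2' + \<beta>'" using yy(2) by auto
          obtain c where c: "c \<in> B" "x1 = c + e0" using x12(1) Aeq by auto
          obtain c' where c': "c' \<in> B" "x1' = c' + e0" using x12'(1) Aeq by auto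
          have cc: "c \<noteq> c'" using yy(3) x12 x12' c c' by auto
          define f where "f = \<beta> - \<beta>'"
          have f0: "f \<noteq> 0" using that(3) unfolding f_def by simp
          have "x2 = y - \<beta>'" using x12(4) by simp
          hence "(f + e0) + c = x2" using x12(3) c(2) unfolding f_def by (simp add: algebra_simps)
          hence e1: "(f + e0) + c \<in> A" using x12(2) by simp
          have "x2' = y' - \<beta>'" using x12'(4) by simp
          hence "(f + e0) + c' = x2'" using x12'(3) c'(2) unfolding f_def by (simp add: algebra_simps)
          hence e2: "(f + e0) + c' \<in> A" using x12'(2) by simp
          have "x + f \<in> A" if "x \<in> A" for x
          proof -
            obtain c'' where c'': "c'' \<in> B" "x = c'' + e0" using \<open>x \<in> A\<close> Aeq by auto
            have "c'' + (f + e0) \<in> A" by (rule b1[OF c(1) c'(1) cc e1 e2 c''(1)])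
            thus ?thesis using c'' by (simp add: algebra_simps)
          qed
          thus False using nonper[OF f0] by blast
        qed
        obtain b1' b2' b3' where b3: "b1' \<in> B" "b2' \<in> B" "b3' \<in> B" "b1' \<noteq> b2'" "b1' \<noteq> b3'" "b2' \<noteq> b3'"
        proof -
          obtain b1' where h1: "b1' \<in> B" using neB by auto
          have "card (B - {b1'}) \<ge> 2" using k3 h1 fB by simp
          hence "B - {b1'} \<noteq> {}" by (intro notI) simp
          then obtain b2' where h2: "b2' \<in> B - {b1'}" by auto
          have "card (B - {b1'} - {b2'}) \<ge> 1" using k3 h1 h2 fB by simp
          hence "B - {b1'} - {b2'} \<noteq> {}" by (intro notI) simp
          then obtain b3' where h3: "b3' \<in> B - {b1'} - {b2'}" by auto
          show ?thesis using that[of b1' b2' b3'] h1 h2 h3 by blast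
        qed
        let ?U1 = "(\<lambda>x. x + b1') ` A" and ?U2 = "(\<lambda>x. x + b2') ` A" and ?U3 = "(\<lambda>x. x + b3') ` A"
        have "?U1 \<union> ?U2 \<union> ?U3 \<subseteq> sp A B" using b3 by (auto intro: sp_I)
        hence "card (?U1 \<union> ?U2 \<union> ?U3) \<le> card (sp A B)" by (rule card_mono[OF fS])
        moreover have "card ?U1 + card ?U2 + card ?U3 \<le> card (?U1 \<union> ?U2 \<union> ?U3) + card (?U1 \<inter> ?U2) + card (?U1 \<inter> ?U3) + card (?U2 \<inter> ?U3)"
          using fA by (intro three_sets_card) auto
        moreover have "card (?U1 \<inter> ?U2) \<le> 1" "card (?U1 \<inter> ?U3) \<le> 1" "card (?U2 \<inter> ?U3) \<le> 1"
          using pair b3 by auto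
        ultimately show ?thesis using CDe True k3 unfolding card_translate by linarith
      qed
    qed
  qed
qed

lemma vosper:
  fixes A B :: "'a::ab_group_add set"
  assumes "finite A" "finite B" "card A \<ge> 2" "card B \<ge> 2"
    "card (sp A B) + 1 \<le> card A + card B" "enat (card (sp A B) + 1) < pG TYPE('a)"
  shows "\<exists>d. d \<noteq> 0 \<and> isAP d A \<and> isAP d B"
  using assms
proof (induction "card A * card B" arbitrary: A B rule: less_induct)
  case less
  show ?case
  proof (cases "card B \<le> card A")
    case True
    show ?thesis by (rule vosper_core[OF less.hyps less.prems(1-4) True less.prems(5,6)])
  next
    case False
    have "\<exists>d. d \<noteq> 0 \<and> isAP d B \<and> isAP d A"
    proof (rule vosper_core[of B A])
      fix A' B' :: "'a set"
      assume h: "card A' * card B' < card B * card A" "finite A'" "finite B'" "2 \<le> card A'" "2 \<le> card B'"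
        "card (sp A' B') + 1 \<le> card A' + card B'" "enat (card (sp A' B') + 1) < pG TYPE('a)"
      have "card A' * card B' < card A * card B" using h(1) by (simp add: mult.commute)
      thus "\<exists>d. d \<noteq> 0 \<and> isAP d A' \<and> isAP d B'" using less.hyps h(2-7) by blast
    qed (use less.prems False in \<open>auto simp: sp_comm add.commute\<close>)
    thus ?thesis by blast
  qed
qed

definition Sig :: "(nat \<Rightarrow> 'a::ab_group_add) \<Rightarrow> nat \<Rightarrow> nat set \<Rightarrow> 'a set" where
  "Sig a j J = {sum a K | K. K \<subseteq> J \<and> card K = j}"

definition mlt :: "(nat \<Rightarrow> 'a) \<Rightarrow> nat set \<Rightarrow> 'a \<Rightarrow> nat" where
  "mlt a J x = card {i \<in> J. a i = x}"

lemma finite_Sig: "finite J \<Longrightarrow> finite (Sig a j J)"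
proof -
  assume "finite J"
  have "Sig a j J \<subseteq> sum a ` Pow J" unfolding Sig_def by auto
  thus ?thesis using \<open>finite J\<close> finite_subset by blast
qed

lemma Sig_ne: assumes "finite J" "j \<le> card J" shows "Sig a j J \<noteq> {}"
proof -
  obtain K where "K \<subseteq> J" "card K = j" using obtain_subset_with_card_n[OF assms(2)] by metis
  thus ?thesis unfolding Sig_def by blast
qed

lemma Sig_1: "Sig a 1 J = a ` J"
proof
  show "Sig a 1 J \<subseteq> a ` J" unfolding Sig_def by (auto simp: card_1_singleton_iff)
  show "a ` J \<subseteq> Sig a 1 J"
  proof
    fix z assume "z \<in> a ` J"
    then obtain i where "i \<in> J" "z = a i" by auto
    hence "{i} \<subseteq> J \<and> card {i} = 1 \<and> z = sum a {i}" by simp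
    thus "z \<in> Sig a 1 J" unfolding Sig_def by blast
  qed
qed

lemma Sig_decomp:
  assumes fJ: "finite J" and FJ: "F \<subseteq> J"
  shows "sp (a ` F) (Sig a j (J - F)) \<subseteq> Sig a (Suc j) J"
proof
  fix z assume "z \<in> sp (a ` F) (Sig a j (J - F))"
  then obtain i K where iK: "i \<in> F" "K \<subseteq> J - F" "card K = j" "z = a i + sum a K"
    unfolding sp_iff Sig_def by blast
  have fK: "finite K" using iK(2) fJ finite_subset by blast
  have iK': "i \<notin> K" using iK by auto
  have "insert i K \<subseteq> J" using iK FJ by auto
  moreover have "card (insert i K) = Suc j" using fK iK' iK(3) by simp
  moreover have "sum a (insert i K) = z" using fK iK' iK(4) by simp
  ultimately show "z \<in> Sig a (Suc j) J" unfolding Sig_def by blast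
qed

lemma sum_mlt:
  assumes "finite V" "finite J"
  shows "(\<Sum>x\<in>V. mlt a J x) = card {i \<in> J. a i \<in> V}"
proof -
  have "{i \<in> J. a i \<in> V} = (\<Union>x\<in>V. {i \<in> J. a i = x})" by auto
  moreover have "card (\<Union>x\<in>V. {i \<in> J. a i = x}) = (\<Sum>x\<in>V. card {i \<in> J. a i = x})"
    using assms by (intro card_UN_disjoint) auto
  ultimately show ?thesis unfolding mlt_def by simp
qed

lemma sum_mlt_le:
  assumes "finite V" "finite J"
  shows "(\<Sum>x\<in>V. mlt a J x) \<le> card J"
  unfolding sum_mlt[OF assms] using assms(2) by (intro card_mono) auto

lemma mlt_le1_inj: assumes "finite J" "\<And>x. mlt a J x \<le> 1" shows "inj_on a J"
proof (rule inj_onI)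
  fix i i' assume h: "i \<in> J" "i' \<in> J" "a i = a i'"
  show "i = i'"
  proof (rule ccontr)
    assume "i \<noteq> i'"
    hence "card {i, i'} = 2" by simp
    moreover have "{i, i'} \<subseteq> {k \<in> J. a k = a i}" using h by auto
    hence "card {i, i'} \<le> mlt a J (a i)" unfolding mlt_def using assms(1) by (intro card_mono) auto
    ultimately show False using assms(2)[of "a i"] by simp
  qed
qed

lemma row:
  assumes fJ: "finite J" and VJ: "V \<subseteq> a ` J"
  defines "F \<equiv> (\<lambda>x. SOME i. i \<in> J \<and> a i = x) ` V"
  shows "F \<subseteq> J" "a ` F = V" "card F = card V"
    "\<And>x. mlt a (J - F) x = (if x \<in> V then mlt a J x - 1 else mlt a J x)"
proof -
  define sel where "sel x = (SOME i. i \<in> J \<and> a i = x)" for x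
  have sel: "sel x \<in> J \<and> a (sel x) = x" if "x \<in> V" for x
  proof -
    have "\<exists>i. i \<in> J \<and> a i = x" using that VJ by auto
    thus ?thesis unfolding sel_def by (rule someI_ex)
  qed
  have Fd: "F = sel ` V" unfolding F_def sel_def by simp
  show FJ: "F \<subseteq> J" unfolding Fd using sel by auto
  show aF: "a ` F = V" unfolding Fd using sel by (force simp: image_image)
  have "inj_on sel V" using sel by (metis inj_onI)
  thus "card F = card V" unfolding Fd by (rule card_image)
  fix x
  show "mlt a (J - F) x = (if x \<in> V then mlt a J x - 1 else mlt a J x)"
  proof (cases "x \<in> V")
    case True
    have "{i \<in> J - F. a i = x} = {i \<in> J. a i = x} - {sel x}"
      unfolding Fd using sel True by auto
    moreover have "sel x \<in> {i \<in> J. a i = x}" using sel[OF True] by simp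
    ultimately show ?thesis unfolding mlt_def using True fJ by simp
  next
    case False
    have "{i \<in> J - F. a i = x} = {i \<in> J. a i = x}"
      unfolding Fd using sel False by auto
    thus ?thesis unfolding mlt_def using False by simp
  qed
qed

lemma LB:
  fixes a :: "nat \<Rightarrow> 'a::ab_group_add"
  assumes "finite J" "1 \<le> j" "j \<le> card J" "\<And>x. mlt a J x \<le> j"
    "enat (card (Sig a j J)) < pG TYPE('a)"
  shows "card J + 1 \<le> card (Sig a j J) + j"
  using assms
proof (induction j arbitrary: J)
  case 0 thus ?case by simp
next
  case (Suc j' J)
  note fJ = Suc.prems(1)
  show ?case
  proof (cases "j' = 0")
    case True
    have "\<And>x. mlt a J x \<le> 1" using Suc.prems(4) True by simp
    hence "inj_on a J" by (rule mlt_le1_inj[OF fJ])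
    hence "card (a ` J) = card J" by (rule card_image)
    thus ?thesis using True Sig_1[of a J] by simp
  next
    case False
    hence j1: "1 \<le> j'" by simp
    define V where "V = {x \<in> a ` J. mlt a J x = Suc j'}"
    have neJ: "J \<noteq> {}" using Suc.prems(3) by auto
    then obtain i0 where i0: "i0 \<in> J" by auto
    define V' where "V' = (if V = {} then {a i0} else V)"
    have V'J: "V' \<subseteq> a ` J" unfolding V'_def V_def using i0 by auto
    have fV': "finite V'" using V'J fJ finite_subset by blast
    have neV': "V' \<noteq> {}" unfolding V'_def by auto
    define F where "F = (\<lambda>x. SOME i. i \<in> J \<and> a i = x) ` V'"
    note R = row[OF fJ V'J, folded F_def]
    have mltF: "mlt a (J - F) x \<le> j'" for x
    proof (cases "x \<in> V'")
      case True thus ?thesis using R(4)[of x] Suc.prems(4)[of x] by simp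
    next
      case False
      have "mlt a J x \<noteq> Suc j'"
      proof
        assume h: "mlt a J x = Suc j'"
        hence "x \<in> a ` J" unfolding mlt_def by (metis (mono_tags, lifting) card.empty empty_Collect_eq image_eqI nat.distinct(1))
        hence "x \<in> V" using h unfolding V_def by simp
        hence "V \<noteq> {}" by auto
        hence "V' = V" unfolding V'_def by simp
        thus False using False \<open>x \<in> V\<close> by simp
      qed
      thus ?thesis using R(4)[of x] Suc.prems(4)[of x] False by simp
    qed
    have cV': "card V' + j' \<le> card J"
    proof (cases "V = {}")
      case True thus ?thesis unfolding V'_def using Suc.prems(3) by simp
    next
      case False
      have fV: "finite V" unfolding V_def using fJ by simp
      have "(\<Sum>x\<in>V. mlt a J x) = card V * Suc j'" unfolding V_def by simp
      moreover have "(\<Sum>x\<in>V. mlt a J x) \<le> card J" by (rule sum_mlt_le[OF fV fJ])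
      moreover have "card V \<ge> 1" using False fV by (simp add: Suc_leI card_gt_0_iff)
      hence "j' \<le> card V * j'" using mult_le_mono1[of 1 "card V" j'] by simp
      moreover have "card V * Suc j' = card V + card V * j'" by simp
      ultimately have "card V + j' \<le> card J" by linarith
      moreover have "V' = V" unfolding V'_def using False by simp
      ultimately show ?thesis by simp
    qed
    have fJF: "finite (J - F)" using fJ by simp
    have cJF: "card (J - F) = card J - card F" using card_Diff_subset[OF finite_subset[OF R(1) fJ] R(1)] .
    have jJF: "j' \<le> card (J - F)" using cJF cV' R(3) by simp
    have dec: "sp (a ` F) (Sig a j' (J - F)) \<subseteq> Sig a (Suc j') J" by (rule Sig_decomp[OF fJ R(1)])
    have neS: "Sig a j' (J - F) \<noteq> {}" by (rule Sig_ne[OF fJF jJF])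
    have neaF: "a ` F \<noteq> {}" using R(2) neV' by simp
    have faF: "finite (a ` F)" using R(2) fV' by simp
    have fS: "finite (Sig a j' (J - F))" by (rule finite_Sig[OF fJF])
    have fS2: "finite (Sig a (Suc j') J)" by (rule finite_Sig[OF fJ])
    have csp: "card (sp (a ` F) (Sig a j' (J - F))) \<le> card (Sig a (Suc j') J)" by (rule card_mono[OF fS2 dec])
    have ltsp: "enat (card (sp (a ` F) (Sig a j' (J - F)))) < pG TYPE('a)"
      using csp Suc.prems(5) by (rule enat_le_lt)
    obtain f0 where f0: "f0 \<in> a ` F" using neaF by auto
    have "card (Sig a j' (J - F)) \<le> card (sp (a ` F) (Sig a j' (J - F)))"
      using card_le_sp[OF fS faF f0] by (simp add: sp_comm)
    hence ltS: "enat (card (Sig a j' (J - F))) < pG TYPE('a)" using ltsp by (rule enat_le_lt)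
    have IH: "card (J - F) + 1 \<le> card (Sig a j' (J - F)) + j'"
      by (rule Suc.IH[OF fJF j1 jJF mltF ltS])
    have cd: "card (a ` F) + card (Sig a j' (J - F)) \<le> card (sp (a ` F) (Sig a j' (J - F))) + 1"
      by (rule CD[OF faF fS neaF neS ltsp])
    have "card (a ` F) = card F" using R(2,3) by simp
    moreover have "card F \<le> card J" using cV' R(3) by simp
    ultimately show ?thesis using IH cd csp cJF by linarith
  qed
qed

lemma enat_minus1: "enat n < p - 1 \<Longrightarrow> enat (Suc n) < p"
  by (cases p) (auto simp: one_enat_def)

lemma arith_prog_of_isAP:
  assumes "d \<noteq> 0" "isAP d A" shows "arith_prog A"
proof -
  obtain c where c: "A = (\<lambda>j. c + nsm j d) ` {..<card A}" using assms(2) unfolding isAP_def by blast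
  have "A = {((\<lambda>x. x + d) ^^ j) c | j. j < card A}"
    by (subst c) (auto simp: iter_nsm)
  thus ?thesis unfolding arith_prog_def using assms(1) by blast
qed

lemma mlt_zero: "x \<notin> a ` J \<Longrightarrow> mlt a J x = 0"
proof -
  assume "x \<notin> a ` J"
  hence "{i \<in> J. a i = x} = {}" by auto
  thus ?thesis unfolding mlt_def by (simp only: card.empty)
qed

lemma mlt_pos_iff: "finite J \<Longrightarrow> (0 < mlt a J x) = (x \<in> a ` J)"
proof -
  assume fJ: "finite J"
  have "(0 < mlt a J x) = ({i \<in> J. a i = x} \<noteq> {})" unfolding mlt_def using fJ by (simp add: card_gt_0_iff)
  also have "\<dots> = (x \<in> a ` J)" by auto
  finally show ?thesis .
qed

theorem theorem6p9:
  fixes a :: "nat \<Rightarrow> 'a::ab_group_add" and l m :: nat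
  assumes "1 \<le> l" and "1 \<le> m" and "l + 2 \<le> m"
  defines "A \<equiv> a ` {1..m}"
  defines "X \<equiv> {x \<in> A. mu l a m x \<ge> 2}"
  defines "P \<equiv> (\<lambda>t. \<exists>T. T \<subseteq> X \<and> card T = t \<and> (\<Sum>x\<in>T. rho a m x) \<ge> l + t)"
  assumes "card X \<ge> 2"
  and "\<exists>t\<ge>2. P t \<and> (\<forall>s. 0 < s \<and> s < t \<longrightarrow> \<not> P s)"
  and "int (card (Sigma_l l a m)) = int (\<Sum>x\<in>A. mu l a m x) - int l + 1"
  and "enat (card (Sigma_l l a m)) < (if l = 2 then pG TYPE('a) - 1 else pG TYPE('a))"
  shows "arith_prog A"
proof -
  define I where "I = {1..m}"
  have fI: "finite I" unfolding I_def by simp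
  have cI: "card I = m" unfolding I_def by simp
  have SigE: "Sigma_l l a m = Sig a l I" unfolding Sigma_l_def Sig_def I_def by simp
  have rhoE: "rho a m x = mlt a I x" for x unfolding rho_def mlt_def I_def by simp
  have AI: "A = a ` I" unfolding A_def I_def by simp
  have fA: "finite A" unfolding AI using fI by simp
  have cX: "card X \<ge> 2" by (rule assms(7))
  have XA: "X \<subseteq> A" unfolding X_def by auto
  have cA: "card A \<ge> 2" using card_mono[OF fA XA] cX by simp
  have "X \<noteq> {}" using cX by auto
  then obtain x0 where "x0 \<in> X" by auto
  hence "mu l a m x0 \<ge> 2" unfolding X_def by simp
  hence l2: "l \<ge> 2" unfolding mu_def by simp
  obtain t where t: "t \<ge> 2" "P t" "\<forall>s. 0 < s \<and> s < t \<longrightarrow> \<not> P s" using assms(8) by blast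
  have nP1: "\<not> P 1" using t by simp
  have rho_le: "mlt a I x \<le> l" for x
  proof (cases "x \<in> X")
    case True
    show ?thesis
    proof (rule ccontr)
      assume "\<not> ?thesis"
      hence "{x} \<subseteq> X \<and> card {x} = 1 \<and> (\<Sum>y\<in>{x}. rho a m y) \<ge> l + 1" using True rhoE by simp
      hence "P 1" unfolding P_def by blast
      thus False using nP1 by simp
    qed
  next
    case False
    show ?thesis
    proof (cases "x \<in> A")
      case True
      hence "mu l a m x < 2" using False unfolding X_def by simp
      hence "rho a m x \<le> 1" unfolding mu_def using l2 by simp
      thus ?thesis using rhoE l2 by simp
    next
      case False
      hence "{i \<in> I. a i = x} = {}" unfolding AI by auto
      hence "mlt a I x = 0" unfolding mlt_def by (simp only: card.empty)
      thus ?thesis by simp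
    qed
  qed
  have mu_eq: "mu l a m x = mlt a I x" for x unfolding mu_def rhoE using rho_le[of x] by simp
  have sumA: "(\<Sum>x\<in>A. mlt a I x) = m"
  proof -
    have "(\<Sum>x\<in>A. mlt a I x) = card {i \<in> I. a i \<in> A}" by (rule sum_mlt[OF fA fI])
    also have "{i \<in> I. a i \<in> A} = I" unfolding AI by auto
    finally show ?thesis using cI by simp
  qed
  have mlt_pos: "mlt a I x \<ge> 1" if "x \<in> A" for x
  proof -
    have "x \<in> a ` I" using that AI by simp
    then obtain i where "i \<in> I" "a i = x" by blast
    hence "{i \<in> I. a i = x} \<noteq> {}" by auto
    moreover have "finite {i \<in> I. a i = x}" using fI by simp
    ultimately show ?thesis unfolding mlt_def by (simp add: Suc_leI card_gt_0_iff)
  qed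
  have ml: "m \<ge> l" using assms(3) by simp
  have "(\<Sum>x\<in>A. mu l a m x) = m" using sumA by (simp add: mu_eq)
  hence "int (card (Sigma_l l a m)) = int m - int l + 1" using assms(9) by simp
  hence cS: "card (Sig a l I) = m + 1 - l" using ml unfolding SigE by linarith
  have XE: "X = {x \<in> A. mlt a I x \<ge> 2}" unfolding X_def mu_eq ..
  have mAl: "card A + l \<le> m"
  proof -
    obtain T where T: "T \<subseteq> X" "card T = t" "(\<Sum>x\<in>T. rho a m x) \<ge> l + t" using t(2) unfolding P_def by blast
    have TA: "T \<subseteq> A" using T XA by auto
    have fT: "finite T" using TA fA finite_subset by blast
    have "m = (\<Sum>x\<in>T. mlt a I x) + (\<Sum>x\<in>A - T. mlt a I x)"
      using sumA sum.subset_diff[OF TA fA, of "mlt a I"] by simp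
    moreover have "(\<Sum>x\<in>A - T. mlt a I x) \<ge> (\<Sum>x\<in>A - T. 1)" using mlt_pos by (intro sum_mono) auto
    moreover have "(\<Sum>x\<in>A - T. (1::nat)) = card A - card T" using card_Diff_subset[OF fT TA] by simp
    moreover have "card T \<le> card A" using card_mono[OF fA TA] .
    ultimately show ?thesis using T rhoE by simp
  qed
  have ltS: "enat (card (Sig a l I)) < pG TYPE('a)"
  proof (cases "l = 2")
    case True
    hence "enat (Suc (card (Sig a l I))) < pG TYPE('a)" using assms(10) SigE by (simp add: enat_minus1)
    thus ?thesis by (rule enat_le_lt[rotated]) simp
  next
    case False thus ?thesis using assms(10) SigE by simp
  qed
  have fSI: "finite (Sig a l I)" by (rule finite_Sig[OF fI])
  have neA: "A \<noteq> {}" using cA by auto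
  have AA: "A \<subseteq> a ` I" using AI by simp
  define F1 where "F1 = (\<lambda>x. SOME i. i \<in> I \<and> a i = x) ` A"
  note R1 = row[OF fI AA, folded F1_def]
  define E where "E = I - F1"
  have fE: "finite E" unfolding E_def using fI by simp
  have cE: "card E + card A = m"
    unfolding E_def using card_Diff_subset[OF finite_subset[OF R1(1) fI] R1(1)] R1(3) cI card_mono[OF fI R1(1)] by simp
  have cEl: "card E \<ge> l" using cE mAl by simp
  have mltE: "mlt a E x = (if x \<in> A then mlt a I x - 1 else mlt a I x)" for x
    unfolding E_def by (rule R1(4))
  have mltE_le: "mlt a E x \<le> l - 1" for x
  proof (cases "x \<in> A")
    case True thus ?thesis using mltE[of x] rho_le[of x] by simp
  next
    case False thus ?thesis using mltE[of x] mlt_zero[of x a I] AI by simp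
  qed
  have dec1: "sp A (Sig a (l - 1) E) \<subseteq> Sig a l I"
    using Sig_decomp[OF fI R1(1), where j="l - 1" and a=a] R1(2) l2 unfolding E_def by simp
  show ?thesis
  proof (cases "l = 2")
    case True
    have "\<And>x. mlt a E x \<le> 1" using mltE_le True by simp
    hence injE: "inj_on a E" by (rule mlt_le1_inj[OF fE])
    define Y where "Y = a ` E"
    have Yeq: "Sig a (l - 1) E = Y" unfolding Y_def using True Sig_1 by simp
    have fY: "finite Y" unfolding Y_def using fE by simp
    have cY: "card Y = card E" unfolding Y_def by (rule card_image[OF injE])
    have sub: "sp A Y \<subseteq> Sig a l I" using dec1 Yeq by simp
    have csub: "card (sp A Y) \<le> card (Sig a l I)" by (rule card_mono[OF fSI sub])
    have "card (Sig a l I) + 1 = m" using cS True assms(3) by simp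
    hence cr: "card (sp A Y) + 1 \<le> card A + card Y" using csub cY cE by linarith
    have "enat (Suc (card (Sig a l I))) < pG TYPE('a)" using True assms(10) SigE by (simp add: enat_minus1)
    hence lt: "enat (card (sp A Y) + 1) < pG TYPE('a)" by (rule enat_le_lt[rotated]) (use csub in simp)
    have cY2: "card Y \<ge> 2" using cY cEl True by simp
    obtain d where d: "d \<noteq> 0" "isAP d A" "isAP d Y" using vosper[OF fA fY cA cY2 cr lt] by blast
    show ?thesis by (rule arith_prog_of_isAP[OF d(1,2)])
  next
    case False
    hence l3: "l \<ge> 3" using l2 by simp
    define Vf where "Vf = {x \<in> A. mlt a I x = l}"
    have XaE: "X \<subseteq> a ` E"
    proof
      fix x assume "x \<in> X"
      hence "x \<in> A \<and> mlt a I x \<ge> 2" using XE by simp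
      hence "x \<in> A" "mlt a I x \<ge> 2" by auto
      hence "0 < mlt a E x" using mltE[of x] by simp
      thus "x \<in> a ` E" using mlt_pos_iff[OF fE, of a x] by simp
    qed
    have faE: "finite (a ` E)" using fE by simp
    have caE: "card (a ` E) \<ge> 2" using card_mono[OF faE XaE] cX by simp
    have VfX: "Vf \<subseteq> X" unfolding Vf_def XE using l2 by auto
    have VfaE: "Vf \<subseteq> a ` E" using VfX XaE by auto
    have fVf: "finite Vf" unfolding Vf_def using fA by simp
    obtain W where W: "Vf \<subseteq> W" "W \<subseteq> a ` E" and Wc: "card W = 2 \<or> (W = Vf \<and> card W \<ge> 3)"
    proof (cases "card Vf \<le> 2")
      case True
      obtain W where W: "Vf \<subseteq> W" "W \<subseteq> a ` E" "card W = 2"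
        using exists_subset_between[OF True caE VfaE faE] by blast
      show ?thesis by (rule that[OF W(1,2)]) (use W(3) in simp)
    next
      case False
      show ?thesis by (rule that[of Vf]) (use False VfaE in auto)
    qed
    have fW: "finite W" using W(2) faE finite_subset by blast
    have cW2: "card W \<ge> 2" using Wc by auto
    have neW: "W \<noteq> {}" using cW2 by auto
    have cWE: "card W \<le> card E" using card_mono[OF faE W(2)] card_image_le[OF fE, of a] by simp
    define F2 where "F2 = (\<lambda>x. SOME i. i \<in> E \<and> a i = x) ` W"
    note R2 = row[OF fE W(2), folded F2_def]
    define E2 where "E2 = E - F2"
    have fE2: "finite E2" unfolding E2_def using fE by simp
    have cE2: "card E2 = card E - card W"
      unfolding E2_def using card_Diff_subset[OF finite_subset[OF R2(1) fE] R2(1)] R2(3) by simp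
    have mltE2: "mlt a E2 x = (if x \<in> W then mlt a E x - 1 else mlt a E x)" for x
      unfolding E2_def by (rule R2(4))
    have mltE2_le: "mlt a E2 x \<le> l - 2" for x
    proof (cases "x \<in> W")
      case True thus ?thesis using mltE2[of x] mltE_le[of x] by simp
    next
      case xW: False
      hence "x \<notin> Vf" using W(1) by auto
      show ?thesis
      proof (cases "x \<in> A")
        case True
        hence "mlt a I x \<noteq> l" using \<open>x \<notin> Vf\<close> unfolding Vf_def by simp
        hence "mlt a I x \<le> l - 1" using rho_le[of x] by simp
        thus ?thesis using mltE2[of x] mltE[of x] xW True by simp
      next
        case False thus ?thesis using mltE2[of x] mltE[of x] mlt_zero[of x a I] AI xW by simp
      qed
    qed
    have cE2l: "card E2 \<ge> l - 2"
    proof (cases "card W = 2")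
      case True thus ?thesis using cE2 cEl by simp
    next
      case False
      hence WV: "W = Vf" "card W \<ge> 3" using Wc by auto
      have "(\<Sum>x\<in>W. mlt a E x) = (\<Sum>x\<in>W. l - 1)"
        using WV(1) mltE unfolding Vf_def by (intro sum.cong) auto
      hence "card W * (l - 1) \<le> card E" using sum_mlt_le[OF fW fE, of a] by simp
      moreover have "card W * (l - 1) = card W * (l - 2) + card W"
      proof -
        have "l - 1 = Suc (l - 2)" using l3 by simp
        thus ?thesis by simp
      qed
      moreover have "3 * (l - 2) \<le> card W * (l - 2)" using WV(2) by (rule mult_le_mono1)
      ultimately show ?thesis using cE2 l3 by linarith
    qed
    define Z where "Z = Sig a (l - 2) E2"
    have fZ: "finite Z" unfolding Z_def by (rule finite_Sig[OF fE2])
    have neZ: "Z \<noteq> {}" unfolding Z_def by (rule Sig_ne[OF fE2 cE2l])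
    have dec2: "sp W Z \<subseteq> Sig a (l - 1) E"
    proof -
      have "sp (a ` F2) (Sig a (l - 2) (E - F2)) \<subseteq> Sig a (Suc (l - 2)) E"
        by (rule Sig_decomp[OF fE R2(1)])
      moreover have "Suc (l - 2) = l - 1" using l3 by simp
      ultimately show ?thesis using R2(2) unfolding Z_def E2_def by simp
    qed
    have sub3: "sp A (sp W Z) \<subseteq> Sig a l I"
      using sp_mono[OF order.refl dec2, of A] dec1 by blast
    have fWZ: "finite (sp W Z)" using fW fZ by simp
    have neWZ: "sp W Z \<noteq> {}" using neW neZ sp_empty_iff by blast
    have fAWZ: "finite (sp A (sp W Z))" using fA fWZ by simp
    have c3: "card (sp A (sp W Z)) \<le> card (Sig a l I)" by (rule card_mono[OF fSI sub3])
    have lt3: "enat (card (sp A (sp W Z))) < pG TYPE('a)" using c3 ltS by (rule enat_le_lt)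
    obtain a0 where a0: "a0 \<in> A" using neA by auto
    have cWZ3: "card (sp W Z) \<le> card (sp A (sp W Z))"
      using card_le_sp[OF fWZ fA a0] by (simp add: sp_comm)
    have ltWZ: "enat (card (sp W Z)) < pG TYPE('a)" using cWZ3 lt3 by (rule enat_le_lt)
    obtain w0 where w0: "w0 \<in> W" using neW by auto
    have cZWZ: "card Z \<le> card (sp W Z)" using card_le_sp[OF fZ fW w0] by (simp add: sp_comm)
    have ltZ: "enat (card Z) < pG TYPE('a)" using cZWZ ltWZ by (rule enat_le_lt)
    have l21: "1 \<le> l - 2" using l3 by simp
    have LBZ: "card E2 + 1 \<le> card Z + (l - 2)"
      unfolding Z_def by (rule LB[OF fE2 l21 cE2l mltE2_le ltZ[unfolded Z_def]])
    have CD1: "card A + card (sp W Z) \<le> card (sp A (sp W Z)) + 1"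
      by (rule CD[OF fA fWZ neA neWZ lt3])
    have CD2: "card W + card Z \<le> card (sp W Z) + 1"
      by (rule CD[OF fW fZ neW neZ ltWZ])
    have crWZ: "card (sp W Z) + 1 \<le> card W + card Z"
      using CD1 c3 cS LBZ cE2 cE cWE ml l3 by linarith
    have assoc: "sp (sp A W) Z = sp A (sp W Z)" by (rule sp_assoc)
    have fAW: "finite (sp A W)" using fA fW by simp
    have neAW: "sp A W \<noteq> {}" using neA neW sp_empty_iff by blast
    have lt3': "enat (card (sp (sp A W) Z)) < pG TYPE('a)" using lt3 assoc by simp
    have CD3: "card (sp A W) + card Z \<le> card (sp (sp A W) Z) + 1"
      by (rule CD[OF fAW fZ neAW neZ lt3'])
    have crAW: "card (sp A W) + 1 \<le> card A + card W"
    proof -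
      have "card (sp (sp A W) Z) \<le> card (Sig a l I)" using c3 assoc by simp
      thus ?thesis using CD3 cS LBZ cE2 cE cWE ml l3 by linarith
    qed
    obtain z0 where z0: "z0 \<in> Z" using neZ by auto
    have "card (sp A W) \<le> card (sp (sp A W) Z)" by (rule card_le_sp[OF fAW fZ z0])
    hence ltAW: "enat (card (sp A W)) < pG TYPE('a)" using lt3' by (rule enat_le_lt)
    show ?thesis
    proof (cases "card W = 2")
      case True
      then obtain x y where xy: "W = {x, y}" "x \<noteq> y" by (auto simp: card_Suc_eq numeral_2_eq_2)
      define d where "d = y - x"
      have d0: "d \<noteq> 0" using xy unfolding d_def by simp
      have Wrep: "W = (\<lambda>j. x + nsm j d) ` {..<2}" unfolding xy(1) d_def by (rule two_AP[OF xy(2)])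
      have "isAP d A" by (rule lemM[OF d0 fA neA Wrep _ _ ltAW]) (use crAW True in simp_all)
      thus ?thesis by (rule arith_prog_of_isAP[OF d0])
    next
      case False
      hence WV: "card W \<ge> 3" using Wc by auto
      have "card W * (l - 1) \<le> card E"
      proof -
        have "W = Vf" using Wc False by auto
        hence "(\<Sum>x\<in>W. mlt a E x) = (\<Sum>x\<in>W. l - 1)"
          using mltE unfolding Vf_def by (intro sum.cong) auto
        thus ?thesis using sum_mlt_le[OF fW fE, of a] by simp
      qed
      moreover have "card W * (l - 1) = card W * (l - 2) + card W"
      proof -
        have "l - 1 = Suc (l - 2)" using l3 by simp
        thus ?thesis by simp
      qed
      moreover have "3 * (l - 2) \<le> card W * (l - 2)" using WV by (rule mult_le_mono1)
      ultimately have "card E2 \<ge> l - 1" using cE2 l3 by linarith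
      hence cZ2: "card Z \<ge> 2" using LBZ l3 by linarith
      have ltWZ1: "enat (card (sp W Z) + 1) < pG TYPE('a)"
        using ltS by (rule enat_le_lt[rotated]) (use CD1 c3 cA in linarith)
      obtain d where d: "d \<noteq> 0" "isAP d W" "isAP d Z"
        using vosper[OF fW fZ cW2 cZ2 crWZ ltWZ1] by blast
      have "isAP d A" by (rule A_from_B[OF d(1,2) fA neA cW2 _ ltAW]) (use crAW in simp)
      thus ?thesis by (rule arith_prog_of_isAP[OF d(1)])
    qed
  qed

qed

end
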